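(* Let $G$ be any GP 2 host graph in which every node is marked grey and is not a root, and every edge is unmarked (node and edge labels arbitrary; parallel edges and loops allowed). Then the execution of the GP 2 program is-connected on $G$ terminates, and: if $G$ is connected, it does not fail and returns a host graph isomorphic to $G$ up to marks; if $G$ is not connected, it fails. (That is, is-connected is totally correct with respect to this input/output specification.)
   Context: A graph is connected if for every pair of distinct nodes $u,v$ there is a path of edges from $u$ to $v$ regardless of edge directions (the empty graph and one-node graphs are connected). "Isomorphic up to marks" means isomorphic when node/edge marks (and root status) are ignored, i.e. same nodes, edges, incidences and labels. GP 2 semantics. Host graphs are finite directed graphs (parallel edges and loops allowed); every node and edge carries a label (a list of integers and strings) and a mark: nodes are unmarked or red, green, blue or grey; edges are unmarked or red, green, blue or dashed. Some nodes are roots. A rule consists of a left-hand graph $L$ and a right-hand graph $R$ sharing an interface of nodes; labels may contain variables; a rule item with mark "any" matches any mark. A rule is applied to a host graph by finding an injective morphism from $L$ into the host graph compatible with labels (for some instantiation of the variables) and marks, mapping roots of $L$ to roots, satisfying the dangling condition (deleted nodes must not be incident with unmatched edges) and the rule's condition; then matched items are deleted/changed/added as prescribed by $R$ (interface nodes take the mark, label and root status given in $R$). Commands: calling a rule or rule set $\{r_1,\dots,r_k\}$ applies one applicable rule and fails if none applies; $P;Q$ is sequencing; $P!$ executes $P$ repeatedly until it fails, returning the graph on which $P$ was last entered, and a break inside the loop body terminates the loop returning the current graph; "try $C$ then $P$ else $Q$" executes $C$ and, if $C$ succeeds, continues with $P$ on its result, otherwise executes $Q$ on the original graph (a missing branch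 means do nothing); "if $C$ then $P$ else $Q$" executes $C$ on a copy and then $P$ (if $C$ succeeded) or $Q$ (if $C$ failed) on the original graph; fail causes failure of the program. The program is-connected (variables x,y,z of type list; all rules keep all labels unchanged): Main = try init then (DFS!; Check); DFS = FORWARD!; try back else break; FORWARD = next_edge; {move, ignore}; Check = if match then fail. In all rules below the edge between nodes 1 and 2 is undirected: it matches a host edge in either direction, and the host edge keeps its direction. - init: a grey non-root node becomes a blue root. - match: a grey node; no change (used as a test). - next_edge: a blue root 1 and a node 2 of any mark joined by an unmarked edge; the edge becomes red. - ignore: a blue root 1 and a blue node 2 joined by a red edge; the edge becomes blue. - move: a blue root 1 and a grey node 2 joined by a red edge; node 1 becomes a non-root (still blue), node 2 becomes a blue root, the edge becomes dashed. - back: a blue non-root node 1 and a blue root 2 joined by a dashed edge; node 1 becomes a root, node 2 a non-root (still blue), the edge becomes blue. *)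

theory Defs
  imports Main
begin

datatype atom = AInt int | AStr string
type_synonym label = "atom list"

datatype nmark = NUnmarked | NRed | NGreen | NBlue | NGrey
datatype emark = EUnmarked | ERed | EGreen | EBlue | EDashed

record ('v, 'e) hgraph =
  V     :: "'v set"
  E     :: "'e set"
  src   :: "'e \<Rightarrow> 'v"
  tgt   :: "'e \<Rightarrow> 'v"
  nlab  :: "'v \<Rightarrow> label"
  elab  :: "'e \<Rightarrow> label"
  nmk   :: "'v \<Rightarrow> nmark"
  emk   :: "'e \<Rightarrow> emark"
  root  :: "'v \<Rightarrow> bool"

definition host_graph :: "('v, 'e) hgraph \<Rightarrow> bool" where
  "host_graph G \<longleftrightarrow> finite (V G) \<and> finite (E G) \<and>
     (\<forall>e\<in>E G. src G e \<in> V G \<and> tgt G e \<in> V G)"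

definition uadj :: "('v, 'e) hgraph \<Rightarrow> 'v \<Rightarrow> 'v \<Rightarrow> bool" where
  "uadj G u v \<longleftrightarrow> (\<exists>e\<in>E G. (src G e = u \<and> tgt G e = v) \<or> (src G e = v \<and> tgt G e = u))"

definition connected_graph :: "('v, 'e) hgraph \<Rightarrow> bool" where
  "connected_graph G \<longleftrightarrow> (\<forall>u\<in>V G. \<forall>v\<in>V G. (uadj G)\<^sup>*\<^sup>* u v)"

definition iso_up_to_marks :: "('v, 'e) hgraph \<Rightarrow> ('w, 'f) hgraph \<Rightarrow> bool" where
  "iso_up_to_marks G H \<longleftrightarrow> (\<exists>fV fE.
     bij_betw fV (V G) (V H) \<and> bij_betw fE (E G) (E H) \<and>
     (\<forall>e\<in>E G. src H (fE e) = fV (src G e) \<and> tgt H (fE e) = fV (tgt G e)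
                \<and> elab H (fE e) = elab G e) \<and>
     (\<forall>v\<in>V G. nlab H (fV v) = nlab G v))"

text \<open>A rule is represented by its application relation: r G H holds iff H is a result
  of applying the rule to G. None of the rules adds or deletes items or changes labels,
  so the result keeps the node/edge identities of G. Rule nodes 1 and 2 are matched
  injectively (u \<noteq> v); the undirected rule edge matches a host edge in either direction.\<close>

definition joins :: "('v, 'e) hgraph \<Rightarrow> 'e \<Rightarrow> 'v \<Rightarrow> 'v \<Rightarrow> bool" where
  "joins G e u v \<longleftrightarrow> e \<in> E G \<and> ((src G e = u \<and> tgt G e = v) \<or> (src G e = v \<and> tgt G e = u))"

definition init_r :: "('v, 'e) hgraph \<Rightarrow> ('v, 'e) hgraph \<Rightarrow> bool" where
  "init_r G H \<longleftrightarrow> (\<exists>u\<in>V G. nmk G u = NGrey \<and>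
     H = G\<lparr>nmk := (nmk G)(u := NBlue), root := (root G)(u := True)\<rparr>)"

definition match_r :: "('v, 'e) hgraph \<Rightarrow> ('v, 'e) hgraph \<Rightarrow> bool" where
  "match_r G H \<longleftrightarrow> (\<exists>u\<in>V G. nmk G u = NGrey) \<and> H = G"

definition next_edge_r :: "('v, 'e) hgraph \<Rightarrow> ('v, 'e) hgraph \<Rightarrow> bool" where
  "next_edge_r G H \<longleftrightarrow> (\<exists>u\<in>V G. \<exists>v\<in>V G. \<exists>e. u \<noteq> v \<and>
     nmk G u = NBlue \<and> root G u \<and> joins G e u v \<and> emk G e = EUnmarked \<and>
     H = G\<lparr>emk := (emk G)(e := ERed), root := (root G)(v := False)\<rparr>)"

definition ignore_r :: "('v, 'e) hgraph \<Rightarrow> ('v, 'e) hgraph \<Rightarrow> bool" where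
  "ignore_r G H \<longleftrightarrow> (\<exists>u\<in>V G. \<exists>v\<in>V G. \<exists>e. u \<noteq> v \<and>
     nmk G u = NBlue \<and> root G u \<and> nmk G v = NBlue \<and> joins G e u v \<and> emk G e = ERed \<and>
     H = G\<lparr>emk := (emk G)(e := EBlue), root := (root G)(v := False)\<rparr>)"

definition move_r :: "('v, 'e) hgraph \<Rightarrow> ('v, 'e) hgraph \<Rightarrow> bool" where
  "move_r G H \<longleftrightarrow> (\<exists>u\<in>V G. \<exists>v\<in>V G. \<exists>e. u \<noteq> v \<and>
     nmk G u = NBlue \<and> root G u \<and> nmk G v = NGrey \<and> joins G e u v \<and> emk G e = ERed \<and>
     H = G\<lparr>nmk := (nmk G)(v := NBlue), emk := (emk G)(e := EDashed),
           root := (root G)(u := False, v := True)\<rparr>)"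

definition back_r :: "('v, 'e) hgraph \<Rightarrow> ('v, 'e) hgraph \<Rightarrow> bool" where
  "back_r G H \<longleftrightarrow> (\<exists>u\<in>V G. \<exists>v\<in>V G. \<exists>e. u \<noteq> v \<and>
     nmk G u = NBlue \<and> nmk G v = NBlue \<and> root G v \<and> joins G e u v \<and> emk G e = EDashed \<and>
     H = G\<lparr>emk := (emk G)(e := EBlue), root := (root G)(u := True, v := False)\<rparr>)"

type_synonym ('v, 'e) rule = "('v, 'e) hgraph \<Rightarrow> ('v, 'e) hgraph \<Rightarrow> bool"

datatype ('v, 'e) cmd =
    Call "('v, 'e) rule set"
  | Seq "('v, 'e) cmd" "('v, 'e) cmd"
  | Loop "('v, 'e) cmd"
  | Break
  | FailC
  | Skip
  | Try "('v, 'e) cmd" "('v, 'e) cmd" "('v, 'e) cmd"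
  | IfC "('v, 'e) cmd" "('v, 'e) cmd" "('v, 'e) cmd"

datatype ('v, 'e) outcome = Ok "('v, 'e) hgraph" | Brk "('v, 'e) hgraph" | Failed

text \<open>Big-step relational semantics (nondeterministic); Brk G models a break
  propagating to the innermost enclosing loop.\<close>
inductive exec :: "('v, 'e) cmd \<Rightarrow> ('v, 'e) hgraph \<Rightarrow> ('v, 'e) outcome \<Rightarrow> bool" where
  call_ok:   "r \<in> R \<Longrightarrow> r G H \<Longrightarrow> exec (Call R) G (Ok H)"
| call_fail: "(\<forall>r\<in>R. \<forall>H. \<not> r G H) \<Longrightarrow> exec (Call R) G Failed"
| seq_ok:    "exec P G (Ok G') \<Longrightarrow> exec Q G' res \<Longrightarrow> exec (Seq P Q) G res"
| seq_fail:  "exec P G Failed \<Longrightarrow> exec (Seq P Q) G Failed"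
| seq_brk:   "exec P G (Brk G') \<Longrightarrow> exec (Seq P Q) G (Brk G')"
| loop_ok:   "exec P G (Ok G') \<Longrightarrow> exec (Loop P) G' res \<Longrightarrow> exec (Loop P) G res"
| loop_fail: "exec P G Failed \<Longrightarrow> exec (Loop P) G (Ok G)"
| loop_brk:  "exec P G (Brk G') \<Longrightarrow> exec (Loop P) G (Ok G')"
| break:     "exec Break G (Brk G)"
| fail:      "exec FailC G Failed"
| skip:      "exec Skip G (Ok G)"
| try_ok:    "exec C G (Ok G') \<Longrightarrow> exec P G' res \<Longrightarrow> exec (Try C P Q) G res"
| try_fail:  "exec C G Failed \<Longrightarrow> exec Q G res \<Longrightarrow> exec (Try C P Q) G res"
| try_brk:   "exec C G (Brk G') \<Longrightarrow> exec (Try C P Q) G (Brk G')"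
| if_ok:     "exec C G (Ok G') \<Longrightarrow> exec P G res \<Longrightarrow> exec (IfC C P Q) G res"
| if_fail:   "exec C G Failed \<Longrightarrow> exec Q G res \<Longrightarrow> exec (IfC C P Q) G res"
| if_brk:    "exec C G (Brk G') \<Longrightarrow> exec (IfC C P Q) G (Brk G')"

text \<open>Termination: every execution of the command from G is finite (least fixpoint,
  i.e. the tree of all executions is well-founded).\<close>
inductive terminates :: "('v, 'e) cmd \<Rightarrow> ('v, 'e) hgraph \<Rightarrow> bool" where
  "terminates (Call R) G"
| "terminates P G \<Longrightarrow> (\<forall>G'. exec P G (Ok G') \<longrightarrow> terminates Q G') \<Longrightarrow> terminates (Seq P Q) G"
| "terminates P G \<Longrightarrow> (\<forall>G'. exec P G (Ok G') \<longrightarrow> terminates (Loop P) G') \<Longrightarrow> terminates (Loop P) G"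
| "terminates Break G"
| "terminates FailC G"
| "terminates Skip G"
| "terminates C G \<Longrightarrow> (\<forall>G'. exec C G (Ok G') \<longrightarrow> terminates P G') \<Longrightarrow>
     (exec C G Failed \<longrightarrow> terminates Q G) \<Longrightarrow> terminates (Try C P Q) G"
| "terminates C G \<Longrightarrow> ((\<exists>G'. exec C G (Ok G')) \<longrightarrow> terminates P G) \<Longrightarrow>
     (exec C G Failed \<longrightarrow> terminates Q G) \<Longrightarrow> terminates (IfC C P Q) G"

definition FORWARD :: "('v, 'e) cmd" where
  "FORWARD = Seq (Call {next_edge_r}) (Call {move_r, ignore_r})"

definition DFS :: "('v, 'e) cmd" where
  "DFS = Seq (Loop FORWARD) (Try (Call {back_r}) Skip Break)"

definition Check :: "('v, 'e) cmd" where
  "Check = IfC (Call {match_r}) FailC Skip"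

definition is_connected_prog :: "('v, 'e) cmd" where
  "is_connected_prog = Try (Call {init_r}) (Seq (Loop DFS) Check) Skip"

end

theory Submission
  imports Defs
begin


inductive_cases callE: "exec (Call R) G res"
inductive_cases seqE: "exec (Seq P Q) G res"
inductive_cases loopE: "exec (Loop P) G res"
inductive_cases tryE: "exec (Try C P Q) G res"
inductive_cases ifE: "exec (IfC C P Q) G res"
inductive_cases skipE: "exec Skip G res"
inductive_cases breakE: "exec Break G res"
inductive_cases failE: "exec FailC G res"

lemma term_exec: "terminates c G \<Longrightarrow> \<exists>res. exec c G res"
proof (induction rule: terminates.induct)
  case (1 R G)
  then show ?case by (metis exec.call_ok exec.call_fail)
next
  case (2 P G Q)
  then obtain r where r: "exec P G r" by blast
  show ?case
  proof (cases r)
    case (Ok G') then show ?thesis using 2 r by (blast intro: exec.intros)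
  qed (use r in \<open>auto intro: exec.intros\<close>)
next
  case (3 P G)
  then obtain r where r: "exec P G r" by blast
  show ?case
  proof (cases r)
    case (Ok G') then show ?thesis using 3 r by (blast intro: exec.intros)
  qed (use r in \<open>auto intro: exec.intros\<close>)
next
  case (7 C G P Q)
  then obtain r where r: "exec C G r" by blast
  show ?case
  proof (cases r)
    case (Ok G') then show ?thesis using 7 r by (blast intro: exec.intros)
  next
    case Failed then show ?thesis using 7 r by (blast intro: exec.intros)
  qed (use r in \<open>auto intro: exec.intros\<close>)
next
  case (8 C G P Q)
  then obtain r where r: "exec C G r" by blast
  show ?case
  proof (cases r)
    case (Ok G') then show ?thesis using 8 r by (blast intro: exec.intros)
  next
    case Failed then show ?thesis using 8 r by (blast intro: exec.intros)
  qed (use r in \<open>auto intro: exec.intros\<close>)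
qed (auto intro: exec.intros)

definition mu :: "('v,'e) hgraph \<Rightarrow> nat" where
  "mu G = 2 * card {e\<in>E G. emk G e = EUnmarked} + card {e\<in>E G. emk G e = EDashed}"

lemma next_mu: "next_edge_r G H \<Longrightarrow> finite (E G) \<Longrightarrow> mu H + 2 = mu G \<and> E H = E G"
proof -
  assume a: "next_edge_r G H" and f: "finite (E G)"
  then obtain u v e where e: "joins G e u v" "emk G e = EUnmarked"
    and H: "H = G\<lparr>emk := (emk G)(e := ERed), root := (root G)(v := False)\<rparr>"
    unfolding next_edge_r_def by blast
  have eE: "e \<in> E G" using e by (simp add: joins_def)
  have U: "{f\<in>E H. emk H f = EUnmarked} = {f\<in>E G. emk G f = EUnmarked} - {e}" using H by auto
  have D: "{f\<in>E H. emk H f = EDashed} = {f\<in>E G. emk G f = EDashed}" using H e by auto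
  have "card {f\<in>E G. emk G f = EUnmarked} \<ge> 1"
  proof -
    have "e \<in> {f\<in>E G. emk G f = EUnmarked}" using eE e by simp
    moreover have "finite {f\<in>E G. emk G f = EUnmarked}" using f by simp
    ultimately have "card {f\<in>E G. emk G f = EUnmarked} > 0" using card_gt_0_iff by blast
    then show ?thesis by simp
  qed
  moreover have "E H = E G" using H by simp
  moreover have "mu H = 2 * card ({f\<in>E G. emk G f = EUnmarked} - {e}) + card {f\<in>E G. emk G f = EDashed}"
    unfolding mu_def U D by simp
  ultimately show ?thesis unfolding mu_def using eE e f by (simp add: card_Diff_singleton)
qed

lemma move_mu: "move_r G H \<Longrightarrow> finite (E G) \<Longrightarrow> mu H = mu G + 1 \<and> E H = E G"
proof -
  assume a: "move_r G H" and f: "finite (E G)"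
  then obtain u v e where e: "joins G e u v" "emk G e = ERed"
    and H: "H = G\<lparr>nmk := (nmk G)(v := NBlue), emk := (emk G)(e := EDashed),
           root := (root G)(u := False, v := True)\<rparr>"
    unfolding move_r_def by blast
  have eE: "e \<in> E G" using e by (simp add: joins_def)
  have HE: "E H = E G" and Hm: "emk H = (emk G)(e := EDashed)" using H by simp_all
  have U: "{f\<in>E H. emk H f = EUnmarked} = {f\<in>E G. emk G f = EUnmarked}" using HE Hm e by auto
  have D: "{f\<in>E H. emk H f = EDashed} = insert e {f\<in>E G. emk G f = EDashed}" using HE Hm e eE by auto
  have nd: "e \<notin> {f\<in>E G. emk G f = EDashed}" using e by simp
  have "mu H = 2 * card {f\<in>E G. emk G f = EUnmarked} + card (insert e {f\<in>E G. emk G f = EDashed})"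
    unfolding mu_def U D by simp
  also have "... = mu G + 1" unfolding mu_def using nd f by simp
  finally show ?thesis using HE by simp
qed

lemma ignore_mu: "ignore_r G H \<Longrightarrow> mu H = mu G \<and> E H = E G"
proof -
  assume a: "ignore_r G H"
  then obtain u v e where e: "joins G e u v" "emk G e = ERed"
    and H: "H = G\<lparr>emk := (emk G)(e := EBlue), root := (root G)(v := False)\<rparr>"
    unfolding ignore_r_def by blast
  have U: "{f\<in>E H. emk H f = EUnmarked} = {f\<in>E G. emk G f = EUnmarked}" using H e by auto
  have D: "{f\<in>E H. emk H f = EDashed} = {f\<in>E G. emk G f = EDashed}" using H e by auto
  have "E H = E G" using H by simp
  moreover have "mu H = mu G" unfolding mu_def U D by simp
  ultimately show ?thesis by simp
qed

lemma back_mu: "back_r G H \<Longrightarrow> finite (E G) \<Longrightarrow> mu H + 1 = mu G \<and> E H = E G"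
proof -
  assume a: "back_r G H" and f: "finite (E G)"
  then obtain u v e where e: "joins G e u v" "emk G e = EDashed"
    and H: "H = G\<lparr>emk := (emk G)(e := EBlue), root := (root G)(u := True, v := False)\<rparr>"
    unfolding back_r_def by blast
  have eE: "e \<in> E G" using e by (simp add: joins_def)
  have U: "{f\<in>E H. emk H f = EUnmarked} = {f\<in>E G. emk G f = EUnmarked}" using H e by auto
  have D: "{f\<in>E H. emk H f = EDashed} = {f\<in>E G. emk G f = EDashed} - {e}" using H by auto
  have "card {f\<in>E G. emk G f = EDashed} \<ge> 1"
  proof -
    have "e \<in> {f\<in>E G. emk G f = EDashed}" using eE e by simp
    moreover have "finite {f\<in>E G. emk G f = EDashed}" using f by simp
    ultimately have "card {f\<in>E G. emk G f = EDashed} > 0" using card_gt_0_iff by blast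
    then show ?thesis by simp
  qed
  moreover have "E H = E G" using H by simp
  moreover have "mu H = 2 * card {f\<in>E G. emk G f = EUnmarked} + card ({f\<in>E G. emk G f = EDashed} - {e})"
    unfolding mu_def U D by simp
  ultimately show ?thesis unfolding mu_def using eE e f by (simp add: card_Diff_singleton)
qed

lemma fwd_ok_mu: "exec FORWARD G (Ok G') \<Longrightarrow> finite (E G) \<Longrightarrow> mu G' < mu G \<and> E G' = E G"
proof -
  assume x: "exec FORWARD G (Ok G')" and f: "finite (E G)"
  then obtain G1 where a: "next_edge_r G G1" and b: "move_r G1 G' \<or> ignore_r G1 G'"
    unfolding FORWARD_def by (auto elim!: seqE callE)
  from next_mu[OF a f] have 1: "mu G1 + 2 = mu G" "E G1 = E G" by auto
  have f1: "finite (E G1)" using 1(2) f by simp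
  from b show ?thesis
  proof
    assume m: "move_r G1 G'"
    from move_mu[OF m f1] have "mu G' = mu G1 + 1" "E G' = E G1" by simp_all
    then show ?thesis using 1 by simp
  next
    assume m: "ignore_r G1 G'"
    from ignore_mu[OF m] have "mu G' = mu G1" "E G' = E G1" by simp_all
    then show ?thesis using 1 by simp
  qed
qed

lemma call_no_brk: "\<not> exec (Call R) G (Brk H)"
proof
  assume "exec (Call R) G (Brk H)" then show False by (cases rule: callE) auto
qed

lemma fwd_no_brk: "\<not> exec FORWARD G (Brk G')"
proof
  assume "exec FORWARD G (Brk G')"
  then have "exec (Seq (Call {next_edge_r}) (Call {move_r, ignore_r})) G (Brk G')" by (simp add: FORWARD_def)
  then show False by (rule seqE) (simp_all add: call_no_brk)
qed

lemma loopF_ok: "exec c G res \<Longrightarrow> c = Loop FORWARD \<Longrightarrow> finite (E G) \<Longrightarrow> res = Ok G' \<Longrightarrow> mu G' \<le> mu G \<and> E G' = E G"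
proof (induction arbitrary: G' rule: exec.induct)
  case (loop_ok P G G1 res)
  have P: "P = FORWARD" using loop_ok.prems(1) by simp
  have s: "mu G1 < mu G" "E G1 = E G" using fwd_ok_mu[of G G1] loop_ok.hyps(1) loop_ok.prems(2) P by simp_all
  have "mu G' \<le> mu G1 \<and> E G' = E G1"
    using loop_ok.IH(2)[OF loop_ok.prems(1)] loop_ok.prems(2,3) s(2) by simp
  then show ?case using s by simp
next
  case (loop_brk P G G1)
  then show ?case using fwd_no_brk by blast
next
  case (loop_fail P G)
  then show ?case by simp
qed simp_all

lemma term_loopF: "finite (E G) \<Longrightarrow> terminates (Loop FORWARD) G"
proof (induction "mu G" arbitrary: G rule: less_induct)
  case less
  show ?case
  proof (rule terminates.intros(3))
    show "terminates FORWARD G" unfolding FORWARD_def by (auto intro: terminates.intros)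
    show "\<forall>G'. exec FORWARD G (Ok G') \<longrightarrow> terminates (Loop FORWARD) G'"
    proof (intro allI impI)
      fix G' assume "exec FORWARD G (Ok G')"
      from fwd_ok_mu[OF this less.prems] have "mu G' < mu G" "finite (E G')" using less.prems by simp_all
      then show "terminates (Loop FORWARD) G'" using less.hyps by blast
    qed
  qed
qed

lemma dfs_ok_inv: "exec DFS G (Ok G') \<Longrightarrow> \<exists>G1. exec (Loop FORWARD) G (Ok G1) \<and> back_r G1 G'"
  unfolding DFS_def
  apply (erule seqE)
    apply (erule tryE)
      apply (erule callE)
       apply (erule skipE)
       apply blast
      apply simp
     apply (erule breakE, simp)
    apply (erule callE, simp)
   apply simp
  apply simp
  apply simp
  done

lemma dfs_ok_mu: "exec DFS G (Ok G') \<Longrightarrow> finite (E G) \<Longrightarrow> mu G' < mu G \<and> E G' = E G"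
proof -
  assume x: "exec DFS G (Ok G')" and f: "finite (E G)"
  then obtain G1 where a: "exec (Loop FORWARD) G (Ok G1)" and b: "back_r G1 G'"
    using dfs_ok_inv by blast
  from loopF_ok[OF a refl f refl] have "mu G1 \<le> mu G" "E G1 = E G" by auto
  then show ?thesis using back_mu[OF b] f by auto
qed

lemma term_dfs: "finite (E G) \<Longrightarrow> terminates DFS G"
  unfolding DFS_def
  by (auto intro!: terminates.intros term_loopF)

lemma term_loopD: "finite (E G) \<Longrightarrow> terminates (Loop DFS) G"
proof (induction "mu G" arbitrary: G rule: less_induct)
  case less
  show ?case
  proof (rule terminates.intros(3))
    show "terminates DFS G" using less term_dfs by blast
    show "\<forall>G'. exec DFS G (Ok G') \<longrightarrow> terminates (Loop DFS) G'"
      using less dfs_ok_mu by metis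
  qed
qed

lemma term_check: "terminates Check G"
  unfolding Check_def by (rule terminates.intros(8)) (auto intro: terminates.intros)

lemma term_prog: "finite (E G) \<Longrightarrow> terminates is_connected_prog G"
  unfolding is_connected_prog_def
proof (rule terminates.intros(7))
  assume f: "finite (E G)"
  show "terminates (Call {init_r}) G" by (rule terminates.intros)
  show "exec (Call {init_r}) G Failed \<longrightarrow> terminates Skip G" by (auto intro: terminates.intros)
  show "\<forall>G'. exec (Call {init_r}) G (Ok G') \<longrightarrow> terminates (Seq (Loop DFS) Check) G'"
  proof (intro allI impI)
    fix G' assume "exec (Call {init_r}) G (Ok G')"
    then have "init_r G G'" by (auto elim: callE)
    then have "E G' = E G" unfolding init_r_def by auto
    then show "terminates (Seq (Loop DFS) Check) G'"
      using f by (auto intro!: terminates.intros(2) term_loopD term_check)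
  qed
qed



definition sameS :: "('v,'e) hgraph \<Rightarrow> ('v,'e) hgraph \<Rightarrow> bool" where
  "sameS G H \<longleftrightarrow> V H = V G \<and> E H = E G \<and> src H = src G \<and> tgt H = tgt G \<and> nlab H = nlab G \<and> elab H = elab G"

definition InvX :: "('v,'e) hgraph \<Rightarrow> 'v \<Rightarrow> 'v list \<Rightarrow> 'e list \<Rightarrow> ('v,'e) hgraph \<Rightarrow> bool" where
  "InvX G0 w xs es G \<longleftrightarrow>
    (host_graph G) \<and>
    (sameS G0 G) \<and>
    (\<forall>x\<in>V G. nmk G x = NGrey \<or> nmk G x = NBlue) \<and>
    (\<forall>f\<in>E G. emk G f \<noteq> ERed) \<and>
    (\<forall>f\<in>E G. emk G f \<noteq> EUnmarked \<longrightarrow> nmk G (src G f) = NBlue \<and> nmk G (tgt G f) = NBlue) \<and>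
    (xs \<noteq> []) \<and>
    (distinct xs) \<and>
    (set xs \<subseteq> V G) \<and>
    (\<forall>x\<in>set xs. nmk G x = NBlue) \<and>
    (\<forall>x\<in>V G. root G x \<longleftrightarrow> x = last xs) \<and>
    (length xs = Suc (length es)) \<and>
    (\<forall>i<length es. joins G (es!i) (xs!i) (xs!Suc i)) \<and>
    (\<forall>f\<in>E G. emk G f = EDashed \<longleftrightarrow> f \<in> set es) \<and>
    (\<forall>x\<in>V G. nmk G x = NBlue \<and> x \<notin> set xs \<longrightarrow> (\<forall>f\<in>E G. (src G f = x \<or> tgt G f = x) \<and> src G f \<noteq> tgt G f \<longrightarrow> emk G f \<noteq> EUnmarked)) \<and>
    (\<forall>x\<in>V G. nmk G x = NBlue \<longrightarrow> (uadj G)\<^sup>*\<^sup>* w x)"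


lemma joins_cong: "E H = E G \<Longrightarrow> src H = src G \<Longrightarrow> tgt H = tgt G \<Longrightarrow> joins H = joins G"
  by (simp add: joins_def fun_eq_iff)

lemma uadj_cong: "E H = E G \<Longrightarrow> src H = src G \<Longrightarrow> tgt H = tgt G \<Longrightarrow> uadj H = uadj G"
  by (simp add: uadj_def fun_eq_iff)

lemma host_cong: "V H = V G \<Longrightarrow> E H = E G \<Longrightarrow> src H = src G \<Longrightarrow> tgt H = tgt G \<Longrightarrow> host_graph H = host_graph G"
  by (simp add: host_graph_def)

lemma sameS_trans: "sameS G0 G \<Longrightarrow> V H = V G \<Longrightarrow> E H = E G \<Longrightarrow> src H = src G \<Longrightarrow> tgt H = tgt G
   \<Longrightarrow> nlab H = nlab G \<Longrightarrow> elab H = elab G \<Longrightarrow> sameS G0 H"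
  by (simp add: sameS_def)

lemma joins_ends: "joins G e a b \<Longrightarrow> joins G e c d \<Longrightarrow> (c = a \<and> d = b) \<or> (c = b \<and> d = a)"
  by (auto simp: joins_def)

lemma joins_E: "joins G e a b \<Longrightarrow> e \<in> E G"
  by (simp add: joins_def)

lemma uadj_joins: "joins G e a b \<Longrightarrow> uadj G a b"
  by (auto simp: joins_def uadj_def)

lemma move_inv:
  assumes I: "InvX G0 w xs es G"
    and u: "u = last xs" and v: "v \<in> V G" "u \<noteq> v" and e: "joins G e u v" "emk G e = EUnmarked"
    and vg: "nmk G v = NGrey"
    and G1: "G1 = G\<lparr>emk := (emk G)(e := ERed), root := (root G)(v := False)\<rparr>"
    and G2: "G2 = G1\<lparr>nmk := (nmk G1)(v := NBlue), emk := (emk G1)(e := EDashed),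
           root := (root G1)(u := False, v := True)\<rparr>"
  shows "InvX G0 w (xs @ [v]) (es @ [e]) G2"
proof -
  have a1: "host_graph G" using I unfolding InvX_def by (elim conjE) assumption
  have a2: "sameS G0 G" using I unfolding InvX_def by (elim conjE) assumption
  have a3: "\<forall>x\<in>V G. nmk G x = NGrey \<or> nmk G x = NBlue" using I unfolding InvX_def by (elim conjE) assumption
  have a4: "\<forall>f\<in>E G. emk G f \<noteq> ERed" using I unfolding InvX_def by (elim conjE) assumption
  have a5: "\<forall>f\<in>E G. emk G f \<noteq> EUnmarked \<longrightarrow> nmk G (src G f) = NBlue \<and> nmk G (tgt G f) = NBlue" using I unfolding InvX_def by (elim conjE) assumption
  have a6: "xs \<noteq> []" using I unfolding InvX_def by (elim conjE) assumption
  have a7: "distinct xs" using I unfolding InvX_def by (elim conjE) assumption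
  have a8: "set xs \<subseteq> V G" using I unfolding InvX_def by (elim conjE) assumption
  have a9: "\<forall>x\<in>set xs. nmk G x = NBlue" using I unfolding InvX_def by (elim conjE) assumption
  have a10: "\<forall>x\<in>V G. root G x \<longleftrightarrow> x = last xs" using I unfolding InvX_def by (elim conjE) assumption
  have a11: "length xs = Suc (length es)" using I unfolding InvX_def by (elim conjE) assumption
  have a12: "\<forall>i<length es. joins G (es!i) (xs!i) (xs!Suc i)" using I unfolding InvX_def by (elim conjE) assumption
  have a13: "\<forall>f\<in>E G. emk G f = EDashed \<longleftrightarrow> f \<in> set es" using I unfolding InvX_def by (elim conjE) assumption
  have a14: "\<forall>x\<in>V G. nmk G x = NBlue \<and> x \<notin> set xs \<longrightarrow> (\<forall>f\<in>E G. (src G f = x \<or> tgt G f = x) \<and> src G f \<noteq> tgt G f \<longrightarrow> emk G f \<noteq> EUnmarked)" using I unfolding InvX_def by (elim conjE) assumption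
  have a15: "\<forall>x\<in>V G. nmk G x = NBlue \<longrightarrow> (uadj G)\<^sup>*\<^sup>* w x" using I unfolding InvX_def by (elim conjE) assumption
  have V2: "V G2 = V G" and E2: "E G2 = E G" and s2: "src G2 = src G" and t2: "tgt G2 = tgt G"
    and nl2: "nlab G2 = nlab G" and el2: "elab G2 = elab G"
    and n2: "nmk G2 = (nmk G)(v := NBlue)" and m2: "emk G2 = (emk G)(e := EDashed)"
    and r2: "\<And>x. root G2 x = (x = v \<or> (x \<noteq> u \<and> root G x))"
    using G1 G2 by auto
  have j2: "joins G2 = joins G" using E2 s2 t2 by (rule joins_cong)
  have ua2: "uadj G2 = uadj G" using E2 s2 t2 by (rule uadj_cong)
  have eE: "e \<in> E G" using e joins_E by metis
  have uin: "u \<in> set xs" using u a6 by simp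
  have ub: "nmk G u = NBlue" using uin a9 by blast
  have uV: "u \<in> V G" using uin a8 by blast
  have vnx: "v \<notin> set xs" using vg a9 by force
  have ends: "(src G e = u \<and> tgt G e = v) \<or> (src G e = v \<and> tgt G e = u)" using e by (simp add: joins_def)
  have lx: "last xs = xs ! length es" using a6 a11 by (simp add: last_conv_nth)
  have c1: "host_graph G2" using a1 V2 E2 s2 t2 host_cong by metis
  have c2: "sameS G0 G2" using a2 V2 E2 s2 t2 nl2 el2 by (rule sameS_trans)
  have c3: "\<forall>x\<in>V G2. nmk G2 x = NGrey \<or> nmk G2 x = NBlue" using a3 V2 n2 by simp
  have c4: "\<forall>f\<in>E G2. emk G2 f \<noteq> ERed" using a4 E2 m2 by simp
  have c5: "\<forall>f\<in>E G2. emk G2 f \<noteq> EUnmarked \<longrightarrow> nmk G2 (src G2 f) = NBlue \<and> nmk G2 (tgt G2 f) = NBlue"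
  proof
    fix f assume f: "f \<in> E G2"
    show "emk G2 f \<noteq> EUnmarked \<longrightarrow> nmk G2 (src G2 f) = NBlue \<and> nmk G2 (tgt G2 f) = NBlue"
    proof (cases "f = e")
      case True then show ?thesis using ends ub n2 s2 t2 by auto
    next
      case False then show ?thesis using a5 f E2 m2 n2 s2 t2 by auto
    qed
  qed
  have c6: "(xs @ [v]) \<noteq> []" by simp
  have c7: "distinct (xs @ [v])" using a7 vnx by simp
  have c8: "set (xs @ [v]) \<subseteq> V G2" using a8 v V2 by simp
  have c9: "\<forall>x\<in>set (xs @ [v]). nmk G2 x = NBlue" using a9 n2 vnx by auto
  have c10: "\<forall>x\<in>V G2. root G2 x \<longleftrightarrow> x = last (xs @ [v])" using a10 r2 V2 u by auto
  have c11: "length (xs @ [v]) = Suc (length (es @ [e]))" using a11 by simp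
  have c12: "\<forall>i<length (es @ [e]). joins G2 ((es @ [e])!i) ((xs @ [v])!i) ((xs @ [v])!Suc i)"
  proof (intro allI impI)
    fix i assume i: "i < length (es @ [e])"
    show "joins G2 ((es @ [e]) ! i) ((xs @ [v]) ! i) ((xs @ [v]) ! Suc i)"
    proof (cases "i < length es")
      case True
      then show ?thesis using a12 a11 j2 by (simp add: nth_append)
    next
      case False
      then have ie: "i = length es" using i by simp
      then show ?thesis using a11 j2 e u lx by (simp add: nth_append)
    qed
  qed
  have c13: "\<forall>f\<in>E G2. emk G2 f = EDashed \<longleftrightarrow> f \<in> set (es @ [e])"
  proof
    fix f assume f: "f \<in> E G2"
    have "e \<notin> set es" using a13 eE e by auto
    then show "emk G2 f = EDashed \<longleftrightarrow> f \<in> set (es @ [e])" using a13 f E2 m2 by auto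
  qed
  have c14: "\<forall>x\<in>V G2. nmk G2 x = NBlue \<and> x \<notin> set (xs @ [v]) \<longrightarrow> (\<forall>f\<in>E G2. (src G2 f = x \<or> tgt G2 f = x) \<and> src G2 f \<noteq> tgt G2 f \<longrightarrow> emk G2 f \<noteq> EUnmarked)"
  proof (intro ballI impI)
    fix x f assume x: "x \<in> V G2" "nmk G2 x = NBlue \<and> x \<notin> set (xs @ [v])" and f: "f \<in> E G2"
      "(src G2 f = x \<or> tgt G2 f = x) \<and> src G2 f \<noteq> tgt G2 f"
    have "x \<noteq> v" "x \<notin> set xs" "nmk G x = NBlue" using x n2 by auto
    then have "emk G f \<noteq> EUnmarked" using a14 x f V2 E2 s2 t2 by auto
    then show "emk G2 f \<noteq> EUnmarked" using m2 by auto
  qed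
  have c15: "\<forall>x\<in>V G2. nmk G2 x = NBlue \<longrightarrow> (uadj G2)\<^sup>*\<^sup>* w x"
  proof (intro ballI impI)
    fix x assume x: "x \<in> V G2" "nmk G2 x = NBlue"
    show "(uadj G2)\<^sup>*\<^sup>* w x"
    proof (cases "x = v")
      case True
      have "(uadj G)\<^sup>*\<^sup>* w u" using a15 uV ub by blast
      moreover have "uadj G u v" using e uadj_joins by metis
      ultimately show ?thesis using True ua2 by (simp add: rtranclp.rtrancl_into_rtrancl)
    next
      case False then show ?thesis using a15 x V2 n2 ua2 by auto
    qed
  qed
  show "InvX G0 w (xs @ [v]) (es @ [e]) G2" unfolding InvX_def using c1 c2 c3 c4 c5 c6 c7 c8 c9 c10 c11 c12 c13 c14 c15 by (intro conjI) assumption+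
qed

lemma ignore_inv:
  assumes I: "InvX G0 w xs es G"
    and u: "u = last xs" and v: "v \<in> V G" "u \<noteq> v" and e: "joins G e u v" "emk G e = EUnmarked"
    and vb: "nmk G v = NBlue"
    and G1: "G1 = G\<lparr>emk := (emk G)(e := ERed), root := (root G)(v := False)\<rparr>"
    and G2: "G2 = G1\<lparr>emk := (emk G1)(e := EBlue), root := (root G1)(v := False)\<rparr>"
  shows "InvX G0 w xs es G2"
proof -
  have a1: "host_graph G" using I unfolding InvX_def by (elim conjE) assumption
  have a2: "sameS G0 G" using I unfolding InvX_def by (elim conjE) assumption
  have a3: "\<forall>x\<in>V G. nmk G x = NGrey \<or> nmk G x = NBlue" using I unfolding InvX_def by (elim conjE) assumption
  have a4: "\<forall>f\<in>E G. emk G f \<noteq> ERed" using I unfolding InvX_def by (elim conjE) assumption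
  have a5: "\<forall>f\<in>E G. emk G f \<noteq> EUnmarked \<longrightarrow> nmk G (src G f) = NBlue \<and> nmk G (tgt G f) = NBlue" using I unfolding InvX_def by (elim conjE) assumption
  have a6: "xs \<noteq> []" using I unfolding InvX_def by (elim conjE) assumption
  have a7: "distinct xs" using I unfolding InvX_def by (elim conjE) assumption
  have a8: "set xs \<subseteq> V G" using I unfolding InvX_def by (elim conjE) assumption
  have a9: "\<forall>x\<in>set xs. nmk G x = NBlue" using I unfolding InvX_def by (elim conjE) assumption
  have a10: "\<forall>x\<in>V G. root G x \<longleftrightarrow> x = last xs" using I unfolding InvX_def by (elim conjE) assumption
  have a11: "length xs = Suc (length es)" using I unfolding InvX_def by (elim conjE) assumption
  have a12: "\<forall>i<length es. joins G (es!i) (xs!i) (xs!Suc i)" using I unfolding InvX_def by (elim conjE) assumption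
  have a13: "\<forall>f\<in>E G. emk G f = EDashed \<longleftrightarrow> f \<in> set es" using I unfolding InvX_def by (elim conjE) assumption
  have a14: "\<forall>x\<in>V G. nmk G x = NBlue \<and> x \<notin> set xs \<longrightarrow> (\<forall>f\<in>E G. (src G f = x \<or> tgt G f = x) \<and> src G f \<noteq> tgt G f \<longrightarrow> emk G f \<noteq> EUnmarked)" using I unfolding InvX_def by (elim conjE) assumption
  have a15: "\<forall>x\<in>V G. nmk G x = NBlue \<longrightarrow> (uadj G)\<^sup>*\<^sup>* w x" using I unfolding InvX_def by (elim conjE) assumption
  have V2: "V G2 = V G" and E2: "E G2 = E G" and s2: "src G2 = src G" and t2: "tgt G2 = tgt G"
    and nl2: "nlab G2 = nlab G" and el2: "elab G2 = elab G"
    and n2: "nmk G2 = nmk G" and m2: "emk G2 = (emk G)(e := EBlue)"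
    and r2: "\<And>x. root G2 x = (x \<noteq> v \<and> root G x)"
    using G1 G2 by auto
  have j2: "joins G2 = joins G" using E2 s2 t2 by (rule joins_cong)
  have ua2: "uadj G2 = uadj G" using E2 s2 t2 by (rule uadj_cong)
  have eE: "e \<in> E G" using e joins_E by metis
  have uin: "u \<in> set xs" using u a6 by simp
  have ub: "nmk G u = NBlue" using uin a9 by blast
  have ends: "(src G e = u \<and> tgt G e = v) \<or> (src G e = v \<and> tgt G e = u)" using e by (simp add: joins_def)
  have c1: "host_graph G2" using a1 V2 E2 s2 t2 host_cong by metis
  have c2: "sameS G0 G2" using a2 V2 E2 s2 t2 nl2 el2 by (rule sameS_trans)
  have c3: "\<forall>x\<in>V G2. nmk G2 x = NGrey \<or> nmk G2 x = NBlue" using a3 V2 n2 by simp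
  have c4: "\<forall>f\<in>E G2. emk G2 f \<noteq> ERed" using a4 E2 m2 by simp
  have c5: "\<forall>f\<in>E G2. emk G2 f \<noteq> EUnmarked \<longrightarrow> nmk G2 (src G2 f) = NBlue \<and> nmk G2 (tgt G2 f) = NBlue"
  proof
    fix f assume f: "f \<in> E G2"
    show "emk G2 f \<noteq> EUnmarked \<longrightarrow> nmk G2 (src G2 f) = NBlue \<and> nmk G2 (tgt G2 f) = NBlue"
    proof (cases "f = e")
      case True then show ?thesis using ends ub vb n2 s2 t2 by auto
    next
      case False then show ?thesis using a5 f E2 m2 n2 s2 t2 by auto
    qed
  qed
  have c6: "xs \<noteq> []" using a6 .
  have c7: "distinct xs" using a7 .
  have c8: "set xs \<subseteq> V G2" using a8 V2 by simp
  have c9: "\<forall>x\<in>set xs. nmk G2 x = NBlue" using a9 n2 by simp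
  have c10: "\<forall>x\<in>V G2. root G2 x \<longleftrightarrow> x = last xs" using a10 r2 V2 u v by auto
  have c11: "length xs = Suc (length es)" using a11 .
  have c12: "\<forall>i<length es. joins G2 (es!i) (xs!i) (xs!Suc i)" using a12 j2 by simp
  have c13: "\<forall>f\<in>E G2. emk G2 f = EDashed \<longleftrightarrow> f \<in> set es"
  proof
    fix f assume f: "f \<in> E G2"
    have "e \<notin> set es" using a13 eE e by auto
    then show "emk G2 f = EDashed \<longleftrightarrow> f \<in> set es" using a13 f E2 m2 by auto
  qed
  have c14: "\<forall>x\<in>V G2. nmk G2 x = NBlue \<and> x \<notin> set xs \<longrightarrow> (\<forall>f\<in>E G2. (src G2 f = x \<or> tgt G2 f = x) \<and> src G2 f \<noteq> tgt G2 f \<longrightarrow> emk G2 f \<noteq> EUnmarked)"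
  proof (intro ballI impI)
    fix x f assume x: "x \<in> V G2" "nmk G2 x = NBlue \<and> x \<notin> set xs" and f: "f \<in> E G2"
      "(src G2 f = x \<or> tgt G2 f = x) \<and> src G2 f \<noteq> tgt G2 f"
    have "emk G f \<noteq> EUnmarked" using a14 x f V2 E2 s2 t2 n2 by auto
    then show "emk G2 f \<noteq> EUnmarked" using m2 by auto
  qed
  have c15: "\<forall>x\<in>V G2. nmk G2 x = NBlue \<longrightarrow> (uadj G2)\<^sup>*\<^sup>* w x" using a15 V2 n2 ua2 by simp
  show "InvX G0 w xs es G2" unfolding InvX_def using c1 c2 c3 c4 c5 c6 c7 c8 c9 c10 c11 c12 c13 c14 c15 by (intro conjI) assumption+
qed

lemma no_next_marked:
  assumes h: "host_graph G" and r: "r \<in> V G" "nmk G r = NBlue" "root G r"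
    and nn: "\<forall>H. \<not> next_edge_r G H" and f: "f \<in> E G" "src G f = r \<or> tgt G f = r" "src G f \<noteq> tgt G f"
  shows "emk G f \<noteq> EUnmarked"
proof
  assume um: "emk G f = EUnmarked"
  obtain y where y: "y \<in> V G" "y \<noteq> r" "joins G f r y"
  proof (cases "src G f = r")
    case True
    then show ?thesis using that[of "tgt G f"] f h unfolding host_graph_def joins_def by auto
  next
    case False
    then show ?thesis using that[of "src G f"] f h unfolding host_graph_def joins_def by auto
  qed
  have "next_edge_r G (G\<lparr>emk := (emk G)(f := ERed), root := (root G)(y := False)\<rparr>)"
    unfolding next_edge_r_def
    apply (rule bexI[where x=r], rule bexI[where x=y], rule exI[where x=f])
    using y r um by auto
  then show False using nn by blast
qed

lemma back_inv:
  assumes I: "InvX G0 w xs es G" and nn: "\<forall>H. \<not> next_edge_r G H" and b: "back_r G G2"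
  shows "InvX G0 w (butlast xs) (butlast es) G2"
proof -
  have a1: "host_graph G" using I unfolding InvX_def by (elim conjE) assumption
  have a2: "sameS G0 G" using I unfolding InvX_def by (elim conjE) assumption
  have a3: "\<forall>x\<in>V G. nmk G x = NGrey \<or> nmk G x = NBlue" using I unfolding InvX_def by (elim conjE) assumption
  have a4: "\<forall>f\<in>E G. emk G f \<noteq> ERed" using I unfolding InvX_def by (elim conjE) assumption
  have a5: "\<forall>f\<in>E G. emk G f \<noteq> EUnmarked \<longrightarrow> nmk G (src G f) = NBlue \<and> nmk G (tgt G f) = NBlue" using I unfolding InvX_def by (elim conjE) assumption
  have a6: "xs \<noteq> []" using I unfolding InvX_def by (elim conjE) assumption
  have a7: "distinct xs" using I unfolding InvX_def by (elim conjE) assumption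
  have a8: "set xs \<subseteq> V G" using I unfolding InvX_def by (elim conjE) assumption
  have a9: "\<forall>x\<in>set xs. nmk G x = NBlue" using I unfolding InvX_def by (elim conjE) assumption
  have a10: "\<forall>x\<in>V G. root G x \<longleftrightarrow> x = last xs" using I unfolding InvX_def by (elim conjE) assumption
  have a11: "length xs = Suc (length es)" using I unfolding InvX_def by (elim conjE) assumption
  have a12: "\<forall>i<length es. joins G (es!i) (xs!i) (xs!Suc i)" using I unfolding InvX_def by (elim conjE) assumption
  have a13: "\<forall>f\<in>E G. emk G f = EDashed \<longleftrightarrow> f \<in> set es" using I unfolding InvX_def by (elim conjE) assumption
  have a14: "\<forall>x\<in>V G. nmk G x = NBlue \<and> x \<notin> set xs \<longrightarrow> (\<forall>f\<in>E G. (src G f = x \<or> tgt G f = x) \<and> src G f \<noteq> tgt G f \<longrightarrow> emk G f \<noteq> EUnmarked)" using I unfolding InvX_def by (elim conjE) assumption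
  have a15: "\<forall>x\<in>V G. nmk G x = NBlue \<longrightarrow> (uadj G)\<^sup>*\<^sup>* w x" using I unfolding InvX_def by (elim conjE) assumption
  obtain u v e where uv: "u \<in> V G" "v \<in> V G" "u \<noteq> v" and ub: "nmk G u = NBlue" and vb: "nmk G v = NBlue"
    and vr: "root G v" and e: "joins G e u v" "emk G e = EDashed"
    and G2: "G2 = G\<lparr>emk := (emk G)(e := EBlue), root := (root G)(u := True, v := False)\<rparr>"
    using b unfolding back_r_def by blast
  have V2: "V G2 = V G" and E2: "E G2 = E G" and s2: "src G2 = src G" and t2: "tgt G2 = tgt G"
    and nl2: "nlab G2 = nlab G" and el2: "elab G2 = elab G"
    and n2: "nmk G2 = nmk G" and m2: "emk G2 = (emk G)(e := EBlue)"
    and r2: "\<And>x. root G2 x = (x \<noteq> v \<and> (x = u \<or> root G x))"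
    using G2 by auto
  have j2: "joins G2 = joins G" using E2 s2 t2 by (rule joins_cong)
  have ua2: "uadj G2 = uadj G" using E2 s2 t2 by (rule uadj_cong)
  have eE: "e \<in> E G" using e joins_E by metis
  have vl: "v = last xs" using a10 uv vr by blast
  define n where "n = length es"
  have lxn: "last xs = xs ! n" using a6 a11 by (simp add: last_conv_nth n_def)
  have eS: "e \<in> set es" using a13 eE e by blast
  then have n1: "n \<ge> 1" by (cases es) (auto simp: n_def)
  have K: "\<And>j. j < n \<Longrightarrow> es ! j = e \<Longrightarrow> Suc j = n \<and> u = xs ! j"
  proof -
    fix j assume j: "j < n" "es ! j = e"
    have jj: "joins G e (xs ! j) (xs ! Suc j)" using a12 j n_def by auto
    have ne1: "xs ! n \<noteq> xs ! j" using a7 a11 j n_def by (simp add: nth_eq_iff_index_eq)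
    from joins_ends[OF jj e(1)]
    have "(u = xs ! j \<and> v = xs ! Suc j) \<or> (u = xs ! Suc j \<and> v = xs ! j)" .
    then have "u = xs ! j \<and> v = xs ! Suc j" using ne1 vl lxn by auto
    moreover then have "Suc j = n" using a7 a11 j n_def vl lxn by (simp add: nth_eq_iff_index_eq)
    ultimately show "Suc j = n \<and> u = xs ! j" by simp
  qed
  obtain i where i: "i < n" "es ! i = e" using eS n_def by (auto simp: in_set_conv_nth)
  have iu: "Suc i = n" "u = xs ! i" using K[OF i] by auto
  have ne: "es \<noteq> []" using i(1) n_def by auto
  have les: "length es = Suc i" using iu(1) n_def by simp
  have le: "last es = e" using ne i(2) les by (simp add: last_conv_nth)
  have enb: "e \<notin> set (butlast es)"
  proof
    assume "e \<in> set (butlast es)"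
    then obtain j where "j < length (butlast es)" "butlast es ! j = e" by (auto simp: in_set_conv_nth)
    then have "j < n - 1" "es ! j = e" using n_def by (auto simp: nth_butlast)
    then show False using K[of j] by linarith
  qed
  have ses: "set es = insert e (set (butlast es))"
  proof -
    have "es = butlast es @ [e]" using le ne by (metis append_butlast_last_id)
    then have "set es = set (butlast es @ [e])" by metis
    then show ?thesis by simp
  qed
  have sxs: "set xs = insert v (set (butlast xs))"
  proof -
    have "xs = butlast xs @ [v]" using vl a6 by (metis append_butlast_last_id)
    then have "set xs = set (butlast xs @ [v])" by metis
    then show ?thesis by simp
  qed
  have lb: "length (butlast xs) = n" using a11 n_def by simp
  have bxs: "butlast xs \<noteq> []"
  proof
    assume "butlast xs = []"
    then have "length (butlast xs) = 0" by simp
    then show False using lb n1 by linarith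
  qed
  have lastb: "last (butlast xs) = u"
  proof -
    have ni: "n - 1 = i" using iu(1) by simp
    have "last (butlast xs) = butlast xs ! (n - 1)" using bxs lb by (simp add: last_conv_nth)
    also have "... = xs ! (n - 1)" using lb n1 by (simp add: nth_butlast)
    finally show ?thesis using ni iu(2) by simp
  qed
  have xsd: "xs = butlast xs @ [v]" using vl a6 by (metis append_butlast_last_id)
  have vnb: "v \<notin> set (butlast xs)"
  proof -
    have "distinct (butlast xs @ [v])" using a7 xsd by metis
    then show ?thesis by simp
  qed
  have c1: "host_graph G2" using a1 V2 E2 s2 t2 host_cong by metis
  have c2: "sameS G0 G2" using a2 V2 E2 s2 t2 nl2 el2 by (rule sameS_trans)
  have c3: "\<forall>x\<in>V G2. nmk G2 x = NGrey \<or> nmk G2 x = NBlue" using a3 V2 n2 by simp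
  have c4: "\<forall>f\<in>E G2. emk G2 f \<noteq> ERed" using a4 E2 m2 by simp
  have c5: "\<forall>f\<in>E G2. emk G2 f \<noteq> EUnmarked \<longrightarrow> nmk G2 (src G2 f) = NBlue \<and> nmk G2 (tgt G2 f) = NBlue"
  proof
    fix f assume f: "f \<in> E G2"
    show "emk G2 f \<noteq> EUnmarked \<longrightarrow> nmk G2 (src G2 f) = NBlue \<and> nmk G2 (tgt G2 f) = NBlue"
    proof (cases "f = e")
      case True then show ?thesis using a5 eE e n2 s2 t2 by auto
    next
      case False then show ?thesis using a5 f E2 m2 n2 s2 t2 by auto
    qed
  qed
  have c6: "(butlast xs) \<noteq> []" using bxs .
  have c7: "distinct (butlast xs)" using a7 by (rule distinct_butlast)
  have c8: "set (butlast xs) \<subseteq> V G2"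
  proof
    fix x assume "x \<in> set (butlast xs)"
    then have "x \<in> set xs" by (rule in_set_butlastD)
    then show "x \<in> V G2" using a8 V2 by auto
  qed
  have c9: "\<forall>x\<in>set (butlast xs). nmk G2 x = NBlue"
  proof
    fix x assume "x \<in> set (butlast xs)"
    then have "x \<in> set xs" by (rule in_set_butlastD)
    then show "nmk G2 x = NBlue" using a9 n2 by simp
  qed
  have c10: "\<forall>x\<in>V G2. root G2 x \<longleftrightarrow> x = last (butlast xs)"
  proof
    fix x assume x: "x \<in> V G2"
    have "root G x \<longleftrightarrow> x = v" using a10 vl x V2 by simp
    then show "root G2 x \<longleftrightarrow> x = last (butlast xs)" unfolding r2 lastb using uv(3) by auto
  qed
  have c11: "length (butlast xs) = Suc (length (butlast es))" using lb n1 n_def by simp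
  have c12: "\<forall>i<length (butlast es). joins G2 ((butlast es)!i) ((butlast xs)!i) ((butlast xs)!Suc i)"
  proof (intro allI impI)
    fix k assume k: "k < length (butlast es)"
    then have "k < n" "Suc k < n" using n_def by auto
    then show "joins G2 (butlast es ! k) (butlast xs ! k) (butlast xs ! Suc k)"
      using a12 j2 k lb n_def by (simp add: nth_butlast)
  qed
  have c13: "\<forall>f\<in>E G2. emk G2 f = EDashed \<longleftrightarrow> f \<in> set (butlast es)"
  proof
    fix f assume f: "f \<in> E G2"
    show "emk G2 f = EDashed \<longleftrightarrow> f \<in> set (butlast es)" using a13 f E2 m2 ses enb by auto
  qed
  have c14: "\<forall>x\<in>V G2. nmk G2 x = NBlue \<and> x \<notin> set (butlast xs) \<longrightarrow> (\<forall>f\<in>E G2. (src G2 f = x \<or> tgt G2 f = x) \<and> src G2 f \<noteq> tgt G2 f \<longrightarrow> emk G2 f \<noteq> EUnmarked)"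
  proof (intro ballI impI)
    fix x f assume x: "x \<in> V G2" "nmk G2 x = NBlue \<and> x \<notin> set (butlast xs)" and f: "f \<in> E G2"
      "(src G2 f = x \<or> tgt G2 f = x) \<and> src G2 f \<noteq> tgt G2 f"
    have "emk G f \<noteq> EUnmarked"
    proof (cases "x = v")
      case True
      then show ?thesis using no_next_marked[OF a1 uv(2) vb vr nn] f E2 s2 t2 by auto
    next
      case False
      then have "x \<notin> set xs" using x sxs by auto
      then show ?thesis using a14 x f V2 E2 s2 t2 n2 by auto
    qed
    then show "emk G2 f \<noteq> EUnmarked" using m2 by auto
  qed
  have c15: "\<forall>x\<in>V G2. nmk G2 x = NBlue \<longrightarrow> (uadj G2)\<^sup>*\<^sup>* w x" using a15 V2 n2 ua2 by simp
  show "InvX G0 w (butlast xs) (butlast es) G2" unfolding InvX_def using c1 c2 c3 c4 c5 c6 c7 c8 c9 c10 c11 c12 c13 c14 c15 by (intro conjI) assumption+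
qed



definition Inv :: "('v,'e) hgraph \<Rightarrow> 'v \<Rightarrow> ('v,'e) hgraph \<Rightarrow> bool" where
  "Inv G0 w G \<longleftrightarrow> (\<exists>xs es. InvX G0 w xs es G)"

definition Fin :: "('v,'e) hgraph \<Rightarrow> 'v \<Rightarrow> ('v,'e) hgraph \<Rightarrow> bool" where
  "Fin G0 w G \<longleftrightarrow> Inv G0 w G \<and> (\<forall>H. \<not> next_edge_r G H) \<and> (\<forall>H. \<not> back_r G H)"

lemma init_inv:
  assumes h: "host_graph G0" and g: "\<forall>v\<in>V G0. nmk G0 v = NGrey \<and> \<not> root G0 v"
    and m: "\<forall>e\<in>E G0. emk G0 e = EUnmarked" and i: "init_r G0 G1"
  shows "\<exists>w. Inv G0 w G1"
proof -
  obtain u where uV: "u \<in> V G0" and G1: "G1 = G0\<lparr>nmk := (nmk G0)(u := NBlue), root := (root G0)(u := True)\<rparr>"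
    using i unfolding init_r_def by blast
  have V2: "V G1 = V G0" and E2: "E G1 = E G0" and s2: "src G1 = src G0" and t2: "tgt G1 = tgt G0"
    and nl2: "nlab G1 = nlab G0" and el2: "elab G1 = elab G0"
    and n2: "nmk G1 = (nmk G0)(u := NBlue)" and m2: "emk G1 = emk G0"
    and r2: "root G1 = (root G0)(u := True)"
    using G1 by auto
  have a2: "sameS G0 G0" by (simp add: sameS_def)
  have c1: "host_graph G1" using h V2 E2 s2 t2 host_cong by metis
  have c2: "sameS G0 G1" using a2 V2 E2 s2 t2 nl2 el2 by (rule sameS_trans)
  have c3: "\<forall>x\<in>V G1. nmk G1 x = NGrey \<or> nmk G1 x = NBlue" using g V2 n2 by simp
  have c4: "\<forall>f\<in>E G1. emk G1 f \<noteq> ERed" using m E2 m2 by simp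
  have c5: "\<forall>f\<in>E G1. emk G1 f \<noteq> EUnmarked \<longrightarrow> nmk G1 (src G1 f) = NBlue \<and> nmk G1 (tgt G1 f) = NBlue" using m E2 m2 by simp
  have c6: "[u] \<noteq> []" by simp
  have c7: "distinct [u]" by simp
  have c8: "set [u] \<subseteq> V G1" using uV V2 by simp
  have c9: "\<forall>x\<in>set [u]. nmk G1 x = NBlue" using n2 by simp
  have c10: "\<forall>x\<in>V G1. root G1 x \<longleftrightarrow> x = last [u]" using g V2 r2 by auto
  have c11: "length [u] = Suc (length [])" by simp
  have c12: "\<forall>i<length []. joins G1 ([]!i) ([u]!i) ([u]!Suc i)" by simp
  have c13: "\<forall>f\<in>E G1. emk G1 f = EDashed \<longleftrightarrow> f \<in> set []" using m E2 m2 by simp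
  have c14: "\<forall>x\<in>V G1. nmk G1 x = NBlue \<and> x \<notin> set [u] \<longrightarrow> (\<forall>f\<in>E G1. (src G1 f = x \<or> tgt G1 f = x) \<and> src G1 f \<noteq> tgt G1 f \<longrightarrow> emk G1 f \<noteq> EUnmarked)" using g V2 n2 by auto
  have c15: "\<forall>x\<in>V G1. nmk G1 x = NBlue \<longrightarrow> (uadj G1)\<^sup>*\<^sup>* u x" using g V2 n2 by auto
  have "InvX G0 u [u] [] G1" unfolding InvX_def using c1 c2 c3 c4 c5 c6 c7 c8 c9 c10 c11 c12 c13 c14 c15
    by (intro conjI) assumption+
  then show ?thesis unfolding Inv_def by blast
qed

lemma next_id:
  assumes I: "InvX G0 w xs es G" and n: "next_edge_r G G1"
  shows "\<exists>v e. v \<in> V G \<and> last xs \<noteq> v \<and> joins G e (last xs) v \<and> emk G e = EUnmarked \<and>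
     G1 = G\<lparr>emk := (emk G)(e := ERed), root := (root G)(v := False)\<rparr>"
proof -
  have a1: "host_graph G" using I unfolding InvX_def by (elim conjE) assumption
  have a2: "sameS G0 G" using I unfolding InvX_def by (elim conjE) assumption
  have a3: "\<forall>x\<in>V G. nmk G x = NGrey \<or> nmk G x = NBlue" using I unfolding InvX_def by (elim conjE) assumption
  have a4: "\<forall>f\<in>E G. emk G f \<noteq> ERed" using I unfolding InvX_def by (elim conjE) assumption
  have a5: "\<forall>f\<in>E G. emk G f \<noteq> EUnmarked \<longrightarrow> nmk G (src G f) = NBlue \<and> nmk G (tgt G f) = NBlue" using I unfolding InvX_def by (elim conjE) assumption
  have a6: "xs \<noteq> []" using I unfolding InvX_def by (elim conjE) assumption
  have a7: "distinct xs" using I unfolding InvX_def by (elim conjE) assumption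
  have a8: "set xs \<subseteq> V G" using I unfolding InvX_def by (elim conjE) assumption
  have a9: "\<forall>x\<in>set xs. nmk G x = NBlue" using I unfolding InvX_def by (elim conjE) assumption
  have a10: "\<forall>x\<in>V G. root G x \<longleftrightarrow> x = last xs" using I unfolding InvX_def by (elim conjE) assumption
  have a11: "length xs = Suc (length es)" using I unfolding InvX_def by (elim conjE) assumption
  have a12: "\<forall>i<length es. joins G (es!i) (xs!i) (xs!Suc i)" using I unfolding InvX_def by (elim conjE) assumption
  have a13: "\<forall>f\<in>E G. emk G f = EDashed \<longleftrightarrow> f \<in> set es" using I unfolding InvX_def by (elim conjE) assumption
  have a14: "\<forall>x\<in>V G. nmk G x = NBlue \<and> x \<notin> set xs \<longrightarrow> (\<forall>f\<in>E G. (src G f = x \<or> tgt G f = x) \<and> src G f \<noteq> tgt G f \<longrightarrow> emk G f \<noteq> EUnmarked)" using I unfolding InvX_def by (elim conjE) assumption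
  have a15: "\<forall>x\<in>V G. nmk G x = NBlue \<longrightarrow> (uadj G)\<^sup>*\<^sup>* w x" using I unfolding InvX_def by (elim conjE) assumption
  obtain u v e where "u \<in> V G" "v \<in> V G" "u \<noteq> v" "root G u" "joins G e u v" "emk G e = EUnmarked"
     "G1 = G\<lparr>emk := (emk G)(e := ERed), root := (root G)(v := False)\<rparr>"
    using n unfolding next_edge_r_def by blast
  moreover then have "u = last xs" using a10 by blast
  ultimately show ?thesis by blast
qed

lemma fwd_inv:
  assumes I: "InvX G0 w xs es G" and n: "next_edge_r G G1" and mi: "move_r G1 G2 \<or> ignore_r G1 G2"
  shows "Inv G0 w G2"
proof -
  have a1: "host_graph G" using I unfolding InvX_def by (elim conjE) assumption
  have a2: "sameS G0 G" using I unfolding InvX_def by (elim conjE) assumption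
  have a3: "\<forall>x\<in>V G. nmk G x = NGrey \<or> nmk G x = NBlue" using I unfolding InvX_def by (elim conjE) assumption
  have a4: "\<forall>f\<in>E G. emk G f \<noteq> ERed" using I unfolding InvX_def by (elim conjE) assumption
  have a5: "\<forall>f\<in>E G. emk G f \<noteq> EUnmarked \<longrightarrow> nmk G (src G f) = NBlue \<and> nmk G (tgt G f) = NBlue" using I unfolding InvX_def by (elim conjE) assumption
  have a6: "xs \<noteq> []" using I unfolding InvX_def by (elim conjE) assumption
  have a7: "distinct xs" using I unfolding InvX_def by (elim conjE) assumption
  have a8: "set xs \<subseteq> V G" using I unfolding InvX_def by (elim conjE) assumption
  have a9: "\<forall>x\<in>set xs. nmk G x = NBlue" using I unfolding InvX_def by (elim conjE) assumption
  have a10: "\<forall>x\<in>V G. root G x \<longleftrightarrow> x = last xs" using I unfolding InvX_def by (elim conjE) assumption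
  have a11: "length xs = Suc (length es)" using I unfolding InvX_def by (elim conjE) assumption
  have a12: "\<forall>i<length es. joins G (es!i) (xs!i) (xs!Suc i)" using I unfolding InvX_def by (elim conjE) assumption
  have a13: "\<forall>f\<in>E G. emk G f = EDashed \<longleftrightarrow> f \<in> set es" using I unfolding InvX_def by (elim conjE) assumption
  have a14: "\<forall>x\<in>V G. nmk G x = NBlue \<and> x \<notin> set xs \<longrightarrow> (\<forall>f\<in>E G. (src G f = x \<or> tgt G f = x) \<and> src G f \<noteq> tgt G f \<longrightarrow> emk G f \<noteq> EUnmarked)" using I unfolding InvX_def by (elim conjE) assumption
  have a15: "\<forall>x\<in>V G. nmk G x = NBlue \<longrightarrow> (uadj G)\<^sup>*\<^sup>* w x" using I unfolding InvX_def by (elim conjE) assumption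
  obtain v e where v: "v \<in> V G" "last xs \<noteq> v" and e: "joins G e (last xs) v" "emk G e = EUnmarked"
    and G1: "G1 = G\<lparr>emk := (emk G)(e := ERed), root := (root G)(v := False)\<rparr>"
    using next_id[OF I n] by blast
  have V1: "V G1 = V G" and n1: "nmk G1 = nmk G" and m1: "emk G1 = (emk G)(e := ERed)"
    and r1: "\<And>x. root G1 x = (x \<noteq> v \<and> root G x)" using G1 by auto
  have j1: "joins G1 = joins G" by (rule joins_cong) (use G1 in auto)
  have ident: "u' = last xs \<and> e' = e \<and> v' = v"
    if h: "u' \<in> V G1" "root G1 u'" "joins G1 e' u' v'" "emk G1 e' = ERed" "u' \<noteq> v'" for u' v' e'
  proof -
    have u': "u' = last xs" using h(1,2) r1 V1 a10 by auto
    have "e' \<in> E G" using h(3) j1 joins_E by metis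
    then have e': "e' = e" using h(4) m1 a4 by (cases "e' = e") auto
    have "joins G e (last xs) v'" using h(3) j1 u' e' by simp
    from joins_ends[OF e(1) this] have "v' = v" using v(2) by auto
    then show ?thesis using u' e' by simp
  qed
  from mi show ?thesis
  proof
    assume "move_r G1 G2"
    then obtain u' v' e' where h: "u' \<in> V G1" "v' \<in> V G1" "u' \<noteq> v'" "root G1 u'" "nmk G1 v' = NGrey"
      "joins G1 e' u' v'" "emk G1 e' = ERed"
      and G2: "G2 = G1\<lparr>nmk := (nmk G1)(v' := NBlue), emk := (emk G1)(e' := EDashed),
           root := (root G1)(u' := False, v' := True)\<rparr>"
      unfolding move_r_def by blast
    have id: "u' = last xs" "e' = e" "v' = v" using ident h by blast+
    have "InvX G0 w (xs @ [v]) (es @ [e]) G2"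
      using move_inv[OF I refl v(1) v(2) e _ G1] h(5) n1 G2 id by simp
    then show ?thesis unfolding Inv_def by blast
  next
    assume "ignore_r G1 G2"
    then obtain u' v' e' where h: "u' \<in> V G1" "v' \<in> V G1" "u' \<noteq> v'" "root G1 u'" "nmk G1 v' = NBlue"
      "joins G1 e' u' v'" "emk G1 e' = ERed"
      and G2: "G2 = G1\<lparr>emk := (emk G1)(e' := EBlue), root := (root G1)(v' := False)\<rparr>"
      unfolding ignore_r_def by blast
    have id: "u' = last xs" "e' = e" "v' = v" using ident h by blast+
    have "InvX G0 w xs es G2"
      using ignore_inv[OF I refl v(1) v(2) e _ G1] h(5) n1 G2 id by simp
    then show ?thesis unfolding Inv_def by blast
  qed
qed

lemma progress:
  assumes I: "InvX G0 w xs es G" and n: "next_edge_r G G1"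
  shows "\<exists>G2. move_r G1 G2 \<or> ignore_r G1 G2"
proof -
  have a1: "host_graph G" using I unfolding InvX_def by (elim conjE) assumption
  have a2: "sameS G0 G" using I unfolding InvX_def by (elim conjE) assumption
  have a3: "\<forall>x\<in>V G. nmk G x = NGrey \<or> nmk G x = NBlue" using I unfolding InvX_def by (elim conjE) assumption
  have a4: "\<forall>f\<in>E G. emk G f \<noteq> ERed" using I unfolding InvX_def by (elim conjE) assumption
  have a5: "\<forall>f\<in>E G. emk G f \<noteq> EUnmarked \<longrightarrow> nmk G (src G f) = NBlue \<and> nmk G (tgt G f) = NBlue" using I unfolding InvX_def by (elim conjE) assumption
  have a6: "xs \<noteq> []" using I unfolding InvX_def by (elim conjE) assumption
  have a7: "distinct xs" using I unfolding InvX_def by (elim conjE) assumption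
  have a8: "set xs \<subseteq> V G" using I unfolding InvX_def by (elim conjE) assumption
  have a9: "\<forall>x\<in>set xs. nmk G x = NBlue" using I unfolding InvX_def by (elim conjE) assumption
  have a10: "\<forall>x\<in>V G. root G x \<longleftrightarrow> x = last xs" using I unfolding InvX_def by (elim conjE) assumption
  have a11: "length xs = Suc (length es)" using I unfolding InvX_def by (elim conjE) assumption
  have a12: "\<forall>i<length es. joins G (es!i) (xs!i) (xs!Suc i)" using I unfolding InvX_def by (elim conjE) assumption
  have a13: "\<forall>f\<in>E G. emk G f = EDashed \<longleftrightarrow> f \<in> set es" using I unfolding InvX_def by (elim conjE) assumption
  have a14: "\<forall>x\<in>V G. nmk G x = NBlue \<and> x \<notin> set xs \<longrightarrow> (\<forall>f\<in>E G. (src G f = x \<or> tgt G f = x) \<and> src G f \<noteq> tgt G f \<longrightarrow> emk G f \<noteq> EUnmarked)" using I unfolding InvX_def by (elim conjE) assumption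
  have a15: "\<forall>x\<in>V G. nmk G x = NBlue \<longrightarrow> (uadj G)\<^sup>*\<^sup>* w x" using I unfolding InvX_def by (elim conjE) assumption
  obtain v e where v: "v \<in> V G" "last xs \<noteq> v" and e: "joins G e (last xs) v" "emk G e = EUnmarked"
    and G1: "G1 = G\<lparr>emk := (emk G)(e := ERed), root := (root G)(v := False)\<rparr>"
    using next_id[OF I n] by blast
  have lV: "last xs \<in> V G" using a6 a8 by auto
  have lb: "nmk G (last xs) = NBlue" using a6 a9 by auto
  have lr: "root G (last xs)" using a10 lV by auto
  have j1: "joins G1 = joins G" by (rule joins_cong) (use G1 in auto)
  have "nmk G v = NGrey \<or> nmk G v = NBlue" using a3 v by blast
  then show ?thesis
  proof
    assume g: "nmk G v = NGrey"
    have "move_r G1 (G1\<lparr>nmk := (nmk G1)(v := NBlue), emk := (emk G1)(e := EDashed),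
           root := (root G1)(last xs := False, v := True)\<rparr>)"
      unfolding move_r_def
      apply (rule bexI[where x="last xs"], rule bexI[where x=v], rule exI[where x=e])
      using g lV lb lr v e j1 G1 by auto
    then show ?thesis by blast
  next
    assume g: "nmk G v = NBlue"
    have "ignore_r G1 (G1\<lparr>emk := (emk G1)(e := EBlue), root := (root G1)(v := False)\<rparr>)"
      unfolding ignore_r_def
      apply (rule bexI[where x="last xs"], rule bexI[where x=v], rule exI[where x=e])
      using g lV lb lr v e j1 G1 by auto
    then show ?thesis by blast
  qed
qed



lemma fwd_exec:
  assumes x: "exec FORWARD G res" and I: "Inv G0 w G"
  shows "(\<exists>G2. res = Ok G2 \<and> Inv G0 w G2) \<or> (res = Failed \<and> (\<forall>H. \<not> next_edge_r G H))"
proof -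
  obtain xs es where I': "InvX G0 w xs es G" using I unfolding Inv_def by blast
  have x': "exec (Seq (Call {next_edge_r}) (Call {move_r, ignore_r})) G res" using x by (simp add: FORWARD_def)
  consider (a) G1 where "exec (Call {next_edge_r}) G (Ok G1)" "exec (Call {move_r, ignore_r}) G1 res"
    | (b) "res = Failed" "exec (Call {next_edge_r}) G Failed"
    | (c) G1 where "res = Brk G1" "exec (Call {next_edge_r}) G (Brk G1)"
    using x' by (rule seqE) blast+
  then show ?thesis
  proof cases
    case (a G1)
    have n: "next_edge_r G G1" using a(1) by (rule callE) auto
    show ?thesis using a(2)
    proof (rule callE)
      fix r H assume "r \<in> {move_r, ignore_r}" "r G1 H" "res = Ok H"
      then show ?thesis using fwd_inv[OF I' n, of H] by auto
    next
      assume "\<forall>r\<in>{move_r, ignore_r}. \<forall>H. \<not> r G1 H"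
      then show ?thesis using progress[OF I' n] by auto
    qed
  next
    case b
    have "\<forall>H. \<not> next_edge_r G H" using b(2) by (rule callE) auto
    then show ?thesis using b by simp
  next
    case c then show ?thesis using call_no_brk by metis
  qed
qed

lemma loopF_inv: "exec c G res \<Longrightarrow> c = Loop FORWARD \<Longrightarrow> Inv G0 w G \<Longrightarrow>
   \<exists>G'. res = Ok G' \<and> Inv G0 w G' \<and> (\<forall>H. \<not> next_edge_r G' H)"
proof (induction rule: exec.induct)
  case (loop_ok P G G1 res)
  have "Inv G0 w G1" using fwd_exec[of G "Ok G1" G0 w] loop_ok by auto
  then show ?case using loop_ok by blast
next
  case (loop_fail P G)
  then show ?case using fwd_exec[of G Failed G0 w] by auto
next
  case (loop_brk P G G1)
  then show ?case using fwd_exec[of G "Brk G1" G0 w] by auto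
qed simp_all

lemma dfs_exec:
  assumes x: "exec DFS G res" and I: "Inv G0 w G"
  shows "(\<exists>G2. res = Ok G2 \<and> Inv G0 w G2) \<or> (\<exists>G1. res = Brk G1 \<and> Fin G0 w G1)"
proof -
  have x': "exec (Seq (Loop FORWARD) (Try (Call {back_r}) Skip Break)) G res" using x by (simp add: DFS_def)
  consider (a) G1 where "exec (Loop FORWARD) G (Ok G1)" "exec (Try (Call {back_r}) Skip Break) G1 res"
    | (b) "res = Failed" "exec (Loop FORWARD) G Failed"
    | (c) G1 where "res = Brk G1" "exec (Loop FORWARD) G (Brk G1)"
    using x' by (rule seqE) blast+
  then show ?thesis
  proof cases
    case (a G1)
    have I1: "Inv G0 w G1" and nn: "\<forall>H. \<not> next_edge_r G1 H" using loopF_inv[OF a(1) refl I] by auto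
    consider (a1) G3 where "exec (Call {back_r}) G1 (Ok G3)" "exec Skip G3 res"
      | (a2) "exec (Call {back_r}) G1 Failed" "exec Break G1 res"
      | (a3) G3 where "res = Brk G3" "exec (Call {back_r}) G1 (Brk G3)"
      using a(2) by (rule tryE) blast+
    then show ?thesis
    proof cases
      case (a1 G3)
      have b: "back_r G1 G3" using a1(1) by (rule callE) auto
      have r: "res = Ok G3" using a1(2) by (rule skipE) auto
      obtain xs es where "InvX G0 w xs es G1" using I1 unfolding Inv_def by blast
      from back_inv[OF this nn b] have "Inv G0 w G3" unfolding Inv_def by blast
      then show ?thesis using r by blast
    next
      case a2
      have nb: "\<forall>H. \<not> back_r G1 H" using a2(1) by (rule callE) auto
      have r: "res = Brk G1" using a2(2) by (rule breakE) auto
      show ?thesis using r nb nn I1 unfolding Fin_def by blast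
    next
      case (a3 G3) then show ?thesis using call_no_brk by metis
    qed
  next
    case b then show ?thesis using loopF_inv[OF b(2) refl I] by auto
  next
    case (c G1) then show ?thesis using loopF_inv[OF c(2) refl I] by auto
  qed
qed

lemma loopD_inv: "exec c G res \<Longrightarrow> c = Loop DFS \<Longrightarrow> Inv G0 w G \<Longrightarrow>
   \<exists>G'. res = Ok G' \<and> Fin G0 w G'"
proof (induction rule: exec.induct)
  case (loop_ok P G G1 res)
  have "Inv G0 w G1" using dfs_exec[of G "Ok G1" G0 w] loop_ok by auto
  then show ?case using loop_ok by blast
next
  case (loop_fail P G)
  then show ?case using dfs_exec[of G Failed G0 w] by auto
next
  case (loop_brk P G G1)
  then show ?case using dfs_exec[of G "Brk G1" G0 w] by auto
qed simp_all

lemma fin_closed: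
  assumes F: "Fin G0 w G"
  shows "Inv G0 w G \<and> (\<exists>r\<in>V G. nmk G r = NBlue) \<and>
    (\<forall>x\<in>V G. nmk G x = NBlue \<longrightarrow> (\<forall>f\<in>E G. (src G f = x \<longrightarrow> nmk G (tgt G f) = NBlue) \<and> (tgt G f = x \<longrightarrow> nmk G (src G f) = NBlue)))"
proof -
  obtain xs es where I: "InvX G0 w xs es G" and nn: "\<forall>H. \<not> next_edge_r G H" and nb: "\<forall>H. \<not> back_r G H"
    using F unfolding Fin_def Inv_def by blast
  have a1: "host_graph G" using I unfolding InvX_def by (elim conjE) assumption
  have a2: "sameS G0 G" using I unfolding InvX_def by (elim conjE) assumption
  have a3: "\<forall>x\<in>V G. nmk G x = NGrey \<or> nmk G x = NBlue" using I unfolding InvX_def by (elim conjE) assumption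
  have a4: "\<forall>f\<in>E G. emk G f \<noteq> ERed" using I unfolding InvX_def by (elim conjE) assumption
  have a5: "\<forall>f\<in>E G. emk G f \<noteq> EUnmarked \<longrightarrow> nmk G (src G f) = NBlue \<and> nmk G (tgt G f) = NBlue" using I unfolding InvX_def by (elim conjE) assumption
  have a6: "xs \<noteq> []" using I unfolding InvX_def by (elim conjE) assumption
  have a7: "distinct xs" using I unfolding InvX_def by (elim conjE) assumption
  have a8: "set xs \<subseteq> V G" using I unfolding InvX_def by (elim conjE) assumption
  have a9: "\<forall>x\<in>set xs. nmk G x = NBlue" using I unfolding InvX_def by (elim conjE) assumption
  have a10: "\<forall>x\<in>V G. root G x \<longleftrightarrow> x = last xs" using I unfolding InvX_def by (elim conjE) assumption
  have a11: "length xs = Suc (length es)" using I unfolding InvX_def by (elim conjE) assumption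
  have a12: "\<forall>i<length es. joins G (es!i) (xs!i) (xs!Suc i)" using I unfolding InvX_def by (elim conjE) assumption
  have a13: "\<forall>f\<in>E G. emk G f = EDashed \<longleftrightarrow> f \<in> set es" using I unfolding InvX_def by (elim conjE) assumption
  have a14: "\<forall>x\<in>V G. nmk G x = NBlue \<and> x \<notin> set xs \<longrightarrow> (\<forall>f\<in>E G. (src G f = x \<or> tgt G f = x) \<and> src G f \<noteq> tgt G f \<longrightarrow> emk G f \<noteq> EUnmarked)" using I unfolding InvX_def by (elim conjE) assumption
  have a15: "\<forall>x\<in>V G. nmk G x = NBlue \<longrightarrow> (uadj G)\<^sup>*\<^sup>* w x" using I unfolding InvX_def by (elim conjE) assumption
  have es0: "es = []"
  proof (rule ccontr)
    assume ne: "es \<noteq> []"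
    define n where "n = length es"
    have n1: "n \<ge> 1" using ne n_def by (cases es) auto
    define e where "e = es ! (n - 1)"
    have jj: "joins G e (xs ! (n - 1)) (xs ! Suc (n - 1))" using a12 n1 n_def e_def by simp
    have sn: "Suc (n - 1) = n" using n1 by simp
    have lxn: "last xs = xs ! n" using a6 a11 by (simp add: last_conv_nth n_def)
    have uV: "xs ! (n - 1) \<in> V G" using a8 a11 n_def nth_mem[of "n - 1" xs] by auto
    have vV: "xs ! n \<in> V G" using a8 a11 n_def nth_mem[of n xs] by auto
    have ub: "nmk G (xs ! (n - 1)) = NBlue" using a9 a11 n_def nth_mem[of "n - 1" xs] by auto
    have vb: "nmk G (xs ! n) = NBlue" using a9 a11 n_def nth_mem[of n xs] by auto
    have uv: "xs ! (n - 1) \<noteq> xs ! n" using a7 a11 n_def n1 by (simp add: nth_eq_iff_index_eq)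
    have vr: "root G (xs ! n)" using a10 vV lxn by auto
    have eS: "e \<in> set es" using e_def n_def n1 by simp
    have ed: "emk G e = EDashed" using a13 eS jj joins_E by metis
    have "back_r G (G\<lparr>emk := (emk G)(e := EBlue), root := (root G)(xs ! (n - 1) := True, xs ! n := False)\<rparr>)"
      unfolding back_r_def
      apply (rule bexI[where x="xs ! (n - 1)"], rule bexI[where x="xs ! n"], rule exI[where x=e])
      using uV vV ub vb uv vr ed jj sn by auto
    then show False using nb by blast
  qed
  then obtain r where xr: "xs = [r]" using a11 by (cases xs) auto
  have rV: "r \<in> V G" using a8 xr by simp
  have rb: "nmk G r = NBlue" using a9 xr by simp
  have rr: "root G r" using a10 rV xr by simp
  have mk: "emk G f \<noteq> EUnmarked" if x: "x \<in> V G" "nmk G x = NBlue" and f: "f \<in> E G"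
    "src G f = x \<or> tgt G f = x" "src G f \<noteq> tgt G f" for x f
  proof (cases "x = r")
    case True then show ?thesis using no_next_marked[OF a1 rV rb rr nn f(1)] f by auto
  next
    case False then show ?thesis using a14 x f xr by auto
  qed
  have cl: "\<forall>x\<in>V G. nmk G x = NBlue \<longrightarrow> (\<forall>f\<in>E G. (src G f = x \<longrightarrow> nmk G (tgt G f) = NBlue) \<and> (tgt G f = x \<longrightarrow> nmk G (src G f) = NBlue))"
  proof (intro ballI impI conjI)
    fix x f assume x: "x \<in> V G" "nmk G x = NBlue" and f: "f \<in> E G"
    show "src G f = x \<Longrightarrow> nmk G (tgt G f) = NBlue"
    proof (cases "src G f = tgt G f")
      case True then show "src G f = x \<Longrightarrow> nmk G (tgt G f) = NBlue" using x by auto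
    next
      case False then show "src G f = x \<Longrightarrow> nmk G (tgt G f) = NBlue" using mk[OF x f] a5 f by auto
    qed
    show "tgt G f = x \<Longrightarrow> nmk G (src G f) = NBlue"
    proof (cases "src G f = tgt G f")
      case True then show "tgt G f = x \<Longrightarrow> nmk G (src G f) = NBlue" using x by auto
    next
      case False then show "tgt G f = x \<Longrightarrow> nmk G (src G f) = NBlue" using mk[OF x f] a5 f by auto
    qed
  qed
  show ?thesis using cl rV rb I unfolding Inv_def by blast
qed

lemma reach_blue:
  assumes r: "(uadj G)\<^sup>*\<^sup>* a b" and h: "host_graph G" and a: "a \<in> V G" "nmk G a = NBlue"
    and cl: "\<forall>x\<in>V G. nmk G x = NBlue \<longrightarrow> (\<forall>f\<in>E G. (src G f = x \<longrightarrow> nmk G (tgt G f) = NBlue) \<and> (tgt G f = x \<longrightarrow> nmk G (src G f) = NBlue))"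
  shows "b \<in> V G \<and> nmk G b = NBlue"
  using r
proof (induction rule: rtranclp_induct)
  case base then show ?case using a by simp
next
  case (step y z)
  then obtain f where f: "f \<in> E G" "(src G f = y \<and> tgt G f = z) \<or> (src G f = z \<and> tgt G f = y)"
    unfolding uadj_def by blast
  have "z \<in> V G" using f h unfolding host_graph_def by auto
  moreover have "nmk G z = NBlue" using f cl step.IH by auto
  ultimately show ?case by simp
qed

lemma uadj_sym: "(uadj G)\<^sup>*\<^sup>* a b \<Longrightarrow> (uadj G)\<^sup>*\<^sup>* b a"
proof (induction rule: rtranclp_induct)
  case base then show ?case by simp
next
  case (step y z)
  have "uadj G z y" using step(2) unfolding uadj_def by blast
  then show ?case using step(3) by (rule converse_rtranclp_into_rtranclp)
qed

lemma sameS_iso: "sameS G0 H \<Longrightarrow> iso_up_to_marks G0 H"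
  unfolding iso_up_to_marks_def sameS_def
  by (rule exI[where x=id], rule exI[where x=id]) (auto simp: bij_betw_def)

lemma check_exec:
  assumes F: "Fin G0 w G" and x: "exec Check G res"
  shows "(connected_graph G0 \<longrightarrow> res = Ok G) \<and> (\<not> connected_graph G0 \<longrightarrow> res = Failed)"
proof -
  have I: "Inv G0 w G" and ex: "\<exists>r\<in>V G. nmk G r = NBlue"
    and cl: "\<forall>x\<in>V G. nmk G x = NBlue \<longrightarrow> (\<forall>f\<in>E G. (src G f = x \<longrightarrow> nmk G (tgt G f) = NBlue) \<and> (tgt G f = x \<longrightarrow> nmk G (src G f) = NBlue))"
    using fin_closed[OF F] by auto
  obtain xs es where I': "InvX G0 w xs es G" using I unfolding Inv_def by blast
  have a1: "host_graph G" using I' unfolding InvX_def by (elim conjE) assumption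
  have a2: "sameS G0 G" using I' unfolding InvX_def by (elim conjE) assumption
  have a3: "\<forall>x\<in>V G. nmk G x = NGrey \<or> nmk G x = NBlue" using I' unfolding InvX_def by (elim conjE) assumption
  have a4: "\<forall>f\<in>E G. emk G f \<noteq> ERed" using I' unfolding InvX_def by (elim conjE) assumption
  have a5: "\<forall>f\<in>E G. emk G f \<noteq> EUnmarked \<longrightarrow> nmk G (src G f) = NBlue \<and> nmk G (tgt G f) = NBlue" using I' unfolding InvX_def by (elim conjE) assumption
  have a6: "xs \<noteq> []" using I' unfolding InvX_def by (elim conjE) assumption
  have a7: "distinct xs" using I' unfolding InvX_def by (elim conjE) assumption
  have a8: "set xs \<subseteq> V G" using I' unfolding InvX_def by (elim conjE) assumption
  have a9: "\<forall>x\<in>set xs. nmk G x = NBlue" using I' unfolding InvX_def by (elim conjE) assumption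
  have a10: "\<forall>x\<in>V G. root G x \<longleftrightarrow> x = last xs" using I' unfolding InvX_def by (elim conjE) assumption
  have a11: "length xs = Suc (length es)" using I' unfolding InvX_def by (elim conjE) assumption
  have a12: "\<forall>i<length es. joins G (es!i) (xs!i) (xs!Suc i)" using I' unfolding InvX_def by (elim conjE) assumption
  have a13: "\<forall>f\<in>E G. emk G f = EDashed \<longleftrightarrow> f \<in> set es" using I' unfolding InvX_def by (elim conjE) assumption
  have a14: "\<forall>x\<in>V G. nmk G x = NBlue \<and> x \<notin> set xs \<longrightarrow> (\<forall>f\<in>E G. (src G f = x \<or> tgt G f = x) \<and> src G f \<noteq> tgt G f \<longrightarrow> emk G f \<noteq> EUnmarked)" using I' unfolding InvX_def by (elim conjE) assumption
  have a15: "\<forall>x\<in>V G. nmk G x = NBlue \<longrightarrow> (uadj G)\<^sup>*\<^sup>* w x" using I' unfolding InvX_def by (elim conjE) assumption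
  have sV: "V G = V G0" and ua: "uadj G = uadj G0"
    using a2 unfolding sameS_def by (auto intro: uadj_cong)
  obtain r where r: "r \<in> V G" "nmk G r = NBlue" using ex by blast
  have x': "exec (IfC (Call {match_r}) FailC Skip) G res" using x by (simp add: Check_def)
  consider (a) G' where "exec (Call {match_r}) G (Ok G')" "exec FailC G res"
    | (b) "exec (Call {match_r}) G Failed" "exec Skip G res"
    | (c) G' where "res = Brk G'" "exec (Call {match_r}) G (Brk G')"
    using x' by (rule ifE) blast+
  note cs = this
  show ?thesis
  proof (intro conjI impI)
    assume conn: "connected_graph G0"
    have allb: "\<forall>y\<in>V G. nmk G y = NBlue"
    proof
      fix y assume y: "y \<in> V G"
      have "(uadj G)\<^sup>*\<^sup>* r y" using conn r(1) y sV ua unfolding connected_graph_def by simp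
      then show "nmk G y = NBlue" using reach_blue[OF _ a1 r cl] by blast
    qed
    have nm: "\<forall>H. \<not> match_r G H" using allb unfolding match_r_def by auto
    from cs show "res = Ok G"
    proof cases
      case (a G') then show ?thesis using nm by (auto elim: callE)
    next
      case b then show ?thesis by (auto elim: skipE)
    next
      case (c G') then show ?thesis using call_no_brk by metis
    qed
  next
    assume nconn: "\<not> connected_graph G0"
    have "\<exists>y\<in>V G. nmk G y = NGrey"
    proof (rule ccontr)
      assume "\<not> (\<exists>y\<in>V G. nmk G y = NGrey)"
      then have allb: "\<forall>y\<in>V G. nmk G y = NBlue" using a3 by auto
      have "connected_graph G0" unfolding connected_graph_def
      proof (intro ballI)
        fix p q assume p: "p \<in> V G0" and q: "q \<in> V G0"
        have "(uadj G)\<^sup>*\<^sup>* w p" "(uadj G)\<^sup>*\<^sup>* w q" using a15 allb p q sV by auto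
        then have "(uadj G)\<^sup>*\<^sup>* p q" using uadj_sym rtranclp_trans by metis
        then show "(uadj G0)\<^sup>*\<^sup>* p q" using ua by simp
      qed
      then show False using nconn by simp
    qed
    then have mm: "match_r G G" unfolding match_r_def by simp
    from cs show "res = Failed"
    proof cases
      case (a G') then show ?thesis by (auto elim: failE)
    next
      case b then show ?thesis using mm by (auto elim: callE)
    next
      case (c G') then show ?thesis using call_no_brk by metis
    qed
  qed
qed



theorem mainTheorem1:
  fixes G :: "('v, 'e) hgraph"
  assumes "host_graph G"
    and "\<forall>v\<in>V G. nmk G v = NGrey \<and> \<not> root G v"
    and "\<forall>e\<in>E G. emk G e = EUnmarked"
  shows "terminates is_connected_prog G
    \<and> (\<exists>res. exec is_connected_prog G res)
    \<and> (connected_graph G \<longrightarrow>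
         (\<forall>res. exec is_connected_prog G res \<longrightarrow>
            (\<exists>H. res = Ok H \<and> iso_up_to_marks G H)))
    \<and> (\<not> connected_graph G \<longrightarrow>
         (\<forall>res. exec is_connected_prog G res \<longrightarrow> res = Failed))"
proof -
  have f: "finite (E G)" using assms(1) unfolding host_graph_def by simp
  have T: "terminates is_connected_prog G" using term_prog[OF f] .
  have Ex: "\<exists>res. exec is_connected_prog G res" using term_exec[OF T] .
  have R: "(connected_graph G \<longrightarrow> (\<exists>H. res = Ok H \<and> iso_up_to_marks G H)) \<and>
           (\<not> connected_graph G \<longrightarrow> res = Failed)" if x: "exec is_connected_prog G res" for res
  proof -
    have x': "exec (Try (Call {init_r}) (Seq (Loop DFS) Check) Skip) G res"
      using x by (simp add: is_connected_prog_def)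
    consider (a) G1 where "exec (Call {init_r}) G (Ok G1)" "exec (Seq (Loop DFS) Check) G1 res"
      | (b) "exec (Call {init_r}) G Failed" "exec Skip G res"
      | (c) G1 where "res = Brk G1" "exec (Call {init_r}) G (Brk G1)"
      using x' by (rule tryE) blast+
    then show ?thesis
    proof cases
      case (a G1)
      have i: "init_r G G1" using a(1) by (rule callE) auto
      obtain w where I1: "Inv G w G1" using init_inv[OF assms i] by blast
      consider (a1) G2 where "exec (Loop DFS) G1 (Ok G2)" "exec Check G2 res"
        | (a2) "res = Failed" "exec (Loop DFS) G1 Failed"
        | (a3) G2 where "res = Brk G2" "exec (Loop DFS) G1 (Brk G2)"
        using a(2) by (rule seqE) blast+
      then show ?thesis
      proof cases
        case (a1 G2)
        have F: "Fin G w G2" using loopD_inv[OF a1(1) refl I1] by auto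
        have "sameS G G2" using F unfolding Fin_def Inv_def InvX_def by blast
        then have iso: "iso_up_to_marks G G2" by (rule sameS_iso)
        show ?thesis using check_exec[OF F a1(2)] iso by blast
      next
        case a2 then show ?thesis using loopD_inv[OF a2(2) refl I1] by auto
      next
        case (a3 G2) then show ?thesis using loopD_inv[OF a3(2) refl I1] by auto
      qed
    next
      case b
      have ni: "\<forall>H. \<not> init_r G H" using b(1) by (rule callE) auto
      have Ve: "V G = {}"
      proof (rule ccontr)
        assume "V G \<noteq> {}"
        then obtain u where u: "u \<in> V G" by blast
        have "init_r G (G\<lparr>nmk := (nmk G)(u := NBlue), root := (root G)(u := True)\<rparr>)"
          unfolding init_r_def using u assms(2) by blast
        then show False using ni by blast
      qed
      have r: "res = Ok G" using b(2) by (rule skipE) auto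
      have "connected_graph G" unfolding connected_graph_def using Ve by simp
      moreover have "iso_up_to_marks G G" by (rule sameS_iso) (simp add: sameS_def)
      ultimately show ?thesis using r by blast
    next
      case (c G1) then show ?thesis using call_no_brk by metis
    qed
  qed
  show ?thesis using T Ex R by blast
qed


end
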